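(* Let $(X,\|\cdot\|_X)$ be a Banach space and $\mathcal{K}\subset X$ compact. Then for every $n_0\in\mathbb{N}\cup\{0\}$ and every $\gamma\ge d_{n_0}(\mathcal{K})_X+\mathrm{rad}(\mathcal{K})$ we have $\lim_{n\to\infty}d_n^\gamma(\mathcal{K})_X=0$.
   Context: $\mathrm{rad}(\mathcal{K})=\inf_{g\in X}\sup_{f\in\mathcal{K}}\|f-g\|_X$. The Kolmogorov widths are $d_0(\mathcal{K})_X=\sup_{f\in\mathcal{K}}\|f\|_X$ and, for $n\ge1$, $d_n(\mathcal{K})_X=\inf_{\dim X_n=n}\sup_{f\in\mathcal{K}}\mathrm{dist}(f,X_n)_X$, infimum over linear subspaces $X_n\subset X$ of dimension $n$. For $k\ge1$ and a norm $\|\cdot\|_{Y_k}$ on $\mathbb{R}^k$ let $B_{Y_k}=\{y\in\mathbb{R}^k:\|y\|_{Y_k}\le1\}$; $d^\gamma(\mathcal{K},Y_k)_X=\inf_{\Phi}\sup_{f\in\mathcal{K}}\inf_{y\in B_{Y_k}}\|f-\Phi(y)\|_X$, the infimum over all maps $\Phi:B_{Y_k}\to X$ with $\|\Phi(y)-\Phi(y')\|_X\le\gamma\|y-y'\|_{Y_k}$; and the Lipschitz width is $d_n^\gamma(\mathcal{K})_X=\inf_{1\le k\le n}\inf_{\|\cdot\|_{Y_k}}d^\gamma(\mathcal{K},Y_k)_X$, the inner infimum over all norms on $\mathbb{R}^k$. *)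

theory Defs
  imports "HOL-Analysis.Analysis"
begin

text \<open>Suprema of nonnegative quantities over K are taken as Sup (insert 0 ...),
  i.e. with the convention that the supremum over an empty set is 0.\<close>
definition cheb_rad :: "'a::real_normed_vector set \<Rightarrow> real" where
  "cheb_rad K = Inf {Sup (insert 0 {norm (f - g) | f. f \<in> K}) | g. True}"

text \<open>Kolmogorov n-width, valued in ereal so that an infimum over an empty
  family of subspaces (when X has dimension < n) is +infinity.\<close>
definition kolm_width :: "'a::real_normed_vector set \<Rightarrow> nat \<Rightarrow> ereal" where
  "kolm_width K n =
    (if n = 0 then ereal (Sup (insert 0 {norm f | f. f \<in> K}))
     else Inf {ereal (Sup (insert 0 {infdist f V | f. f \<in> K})) | V.
                 subspace V \<and> dim V = n})"

text \<open>R^k is modelled as the functions nat \<Rightarrow> real vanishing from index k on.\<close>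
definition Rk :: "nat \<Rightarrow> (nat \<Rightarrow> real) set" where
  "Rk k = {y. \<forall>i\<ge>k. y i = 0}"

definition is_norm_Rk :: "nat \<Rightarrow> ((nat \<Rightarrow> real) \<Rightarrow> real) \<Rightarrow> bool" where
  "is_norm_Rk k N \<longleftrightarrow>
     (\<forall>y\<in>Rk k. N y \<ge> 0) \<and>
     (\<forall>y\<in>Rk k. N y = 0 \<longleftrightarrow> y = (\<lambda>_. 0)) \<and>
     (\<forall>c. \<forall>y\<in>Rk k. N (\<lambda>i. c * y i) = \<bar>c\<bar> * N y) \<and>
     (\<forall>y\<in>Rk k. \<forall>z\<in>Rk k. N (\<lambda>i. y i + z i) \<le> N y + N z)"

definition unit_ball_Rk :: "nat \<Rightarrow> ((nat \<Rightarrow> real) \<Rightarrow> real) \<Rightarrow> (nat \<Rightarrow> real) set" where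
  "unit_ball_Rk k N = {y \<in> Rk k. N y \<le> 1}"

definition lip_on_ball :: "real \<Rightarrow> nat \<Rightarrow> ((nat \<Rightarrow> real) \<Rightarrow> real) \<Rightarrow> ((nat \<Rightarrow> real) \<Rightarrow> 'a::real_normed_vector) \<Rightarrow> bool" where
  "lip_on_ball \<gamma> k N \<Phi> \<longleftrightarrow>
     (\<forall>y\<in>unit_ball_Rk k N. \<forall>y'\<in>unit_ball_Rk k N.
        norm (\<Phi> y - \<Phi> y') \<le> \<gamma> * N (\<lambda>i. y i - y' i))"

definition lip_width_Y :: "'a::real_normed_vector set \<Rightarrow> real \<Rightarrow> nat \<Rightarrow> ((nat \<Rightarrow> real) \<Rightarrow> real) \<Rightarrow> real" where
  "lip_width_Y K \<gamma> k N =
     Inf {Sup (insert 0 {Inf {norm (f - \<Phi> y) | y. y \<in> unit_ball_Rk k N} | f. f \<in> K}) | \<Phi>.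
            lip_on_ball \<gamma> k N \<Phi>}"

text \<open>Lipschitz width d_n^gamma(K)_X (meaningful for n \<ge> 1).\<close>
definition lip_width :: "'a::real_normed_vector set \<Rightarrow> real \<Rightarrow> nat \<Rightarrow> real" where
  "lip_width K \<gamma> n = Inf {lip_width_Y K \<gamma> k N | k N. 1 \<le> k \<and> k \<le> n \<and> is_norm_Rk k N}"

end

theory Submission
  imports Defs
begin

lemma bound_K:
  fixes K :: "'a::real_normed_vector set"
  assumes "compact K"
  obtains B where "\<And>f. f \<in> K \<Longrightarrow> norm f \<le> B"
  using compact_imp_bounded[OF assms] by (auto simp: bounded_iff)

lemma sup0_ge: "bdd_above (A::real set) \<Longrightarrow> 0 \<le> Sup (insert 0 A)"
  by (rule cSup_upper) auto

lemma sup0_le: "(\<And>x. x \<in> (A::real set) \<Longrightarrow> x \<le> c) \<Longrightarrow> 0 \<le> c \<Longrightarrow> Sup (insert 0 A) \<le> c"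
  by (rule cSup_least) auto

lemma le_sup0: "bdd_above (A::real set) \<Longrightarrow> x \<in> A \<Longrightarrow> x \<le> Sup (insert 0 A)"
  by (rule cSup_upper) auto

lemma cheb_elem_bdd:
  fixes K :: "'a::real_normed_vector set"
  assumes "compact K"
  shows "bdd_above {norm (f - g) | f. f \<in> K}"
proof -
  obtain B where B: "\<And>f. f \<in> K \<Longrightarrow> norm f \<le> B" using bound_K[OF assms] by blast
  show ?thesis
  proof (rule bdd_aboveI[of _ "B + norm g"])
    fix x assume "x \<in> {norm (f - g) | f. f \<in> K}"
    then obtain f where "f \<in> K" "x = norm (f - g)" by blast
    then show "x \<le> B + norm g" using B[of f] norm_triangle_ineq4[of f g] by linarith
  qed
qed

lemma cheb_nonneg:
  fixes K :: "'a::real_normed_vector set"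
  assumes "compact K"
  shows "0 \<le> cheb_rad K"
  unfolding cheb_rad_def
  by (rule cInf_greatest) (auto intro!: sup0_ge cheb_elem_bdd[OF assms])

lemma cheb_center:
  fixes K :: "'a::real_normed_vector set"
  assumes "compact K" "\<eta> > 0"
  obtains g where "\<And>f. f \<in> K \<Longrightarrow> norm (f - g) \<le> cheb_rad K + \<eta>"
proof -
  let ?S = "{Sup (insert 0 {norm (f - g) | f. f \<in> K}) | g. True}"
  have "?S \<noteq> {}" by blast
  moreover have "Inf ?S < cheb_rad K + \<eta>" using assms(2) unfolding cheb_rad_def by simp
  ultimately have "\<exists>x\<in>?S. x < cheb_rad K + \<eta>" by (rule cInf_lessD)
  then obtain x where x: "x \<in> ?S" "x < cheb_rad K + \<eta>" by (elim bexE) 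
  from x(1) obtain g where "x = Sup (insert 0 {norm (f - g) | f. f \<in> K})" by (elim CollectE exE conjE)
  with x(2) have g: "Sup (insert 0 {norm (f - g) | f. f \<in> K}) < cheb_rad K + \<eta>" by simp
  show ?thesis
  proof (rule that)
    fix f assume "f \<in> K"
    then have "norm (f - g) \<le> Sup (insert 0 {norm (f - g) | f. f \<in> K})"
      by (intro le_sup0 cheb_elem_bdd[OF assms(1)]) auto
    then show "norm (f - g) \<le> cheb_rad K + \<eta>" using g by linarith
  qed
qed

lemma kolm_nonneg:
  fixes K :: "'a::real_normed_vector set"
  assumes "compact K"
  shows "0 \<le> kolm_width K n"
proof -
  obtain B where B: "\<And>f. f \<in> K \<Longrightarrow> norm f \<le> B" using bound_K[OF assms] by blast
  show ?thesis
  proof (cases "n = 0")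
    case True
    have "bdd_above {norm f | f. f \<in> K}" by (rule bdd_aboveI[of _ B]) (auto intro: B)
    then show ?thesis using True sup0_ge unfolding kolm_width_def by simp
  next
    case False
    have "0 \<le> ereal (Sup (insert 0 {infdist f V | f. f \<in> K}))" if "subspace V" for V
    proof -
      have "bdd_above {infdist f V | f. f \<in> K}"
      proof (rule bdd_aboveI[of _ B])
        fix x assume "x \<in> {infdist f V | f. f \<in> K}"
        then obtain f where f: "f \<in> K" "x = infdist f V" by blast
        have "infdist f V \<le> dist f 0" using infdist_le[OF subspace_0[OF that]] .
        then show "x \<le> B" using f B[of f] by simp
      qed
      then show ?thesis using sup0_ge by simp
    qed
    then show ?thesis using False unfolding kolm_width_def
      by (auto intro!: Inf_greatest)
  qed
qed

lemma zero_Rk: "(\<lambda>_. 0) \<in> Rk k" by (simp add: Rk_def)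

lemma diff_Rk: "y \<in> Rk k \<Longrightarrow> y' \<in> Rk k \<Longrightarrow> (\<lambda>i. y i - y' i) \<in> Rk k"
  by (simp add: Rk_def)

lemma zero_ball: "is_norm_Rk k N \<Longrightarrow> (\<lambda>_. 0) \<in> unit_ball_Rk k N"
  unfolding unit_ball_Rk_def is_norm_Rk_def using zero_Rk[of k] by auto

lemma inner_bdd:
  fixes K :: "'a::real_normed_vector set"
  assumes K: "compact K" and N: "is_norm_Rk k N"
  shows "bdd_above {Inf {norm (f - \<Phi> y) | y. y \<in> unit_ball_Rk k N} | f. f \<in> K}"
proof -
  obtain B where B: "\<And>f. f \<in> K \<Longrightarrow> norm f \<le> B" using bound_K[OF K] by blast
  show ?thesis
  proof (rule bdd_aboveI[of _ "B + norm (\<Phi> (\<lambda>_. 0))"])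
    fix x assume "x \<in> {Inf {norm (f - \<Phi> y) | y. y \<in> unit_ball_Rk k N} | f. f \<in> K}"
    then obtain f where f: "f \<in> K" "x = Inf {norm (f - \<Phi> y) | y. y \<in> unit_ball_Rk k N}" by blast
    have "x \<le> norm (f - \<Phi> (\<lambda>_. 0))" unfolding f(2)
      by (rule cInf_lower) (auto intro: zero_ball[OF N] bdd_belowI[of _ 0])
    also have "\<dots> \<le> B + norm (\<Phi> (\<lambda>_. 0))" using B[OF f(1)] norm_triangle_ineq4[of f "\<Phi> (\<lambda>_. 0)"] by linarith
    finally show "x \<le> B + norm (\<Phi> (\<lambda>_. 0))" .
  qed
qed

lemma lipY_nonneg:
  fixes K :: "'a::real_normed_vector set"
  assumes K: "compact K" and N: "is_norm_Rk k N" and g: "0 \<le> \<gamma>"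
  shows "0 \<le> lip_width_Y K \<gamma> k N"
proof -
  have "lip_on_ball \<gamma> k N (\<lambda>_. (0::'a))"
    unfolding lip_on_ball_def
  proof (intro ballI)
    fix y y' assume "y \<in> unit_ball_Rk k N" "y' \<in> unit_ball_Rk k N"
    then have "(\<lambda>i. y i - y' i) \<in> Rk k" by (auto simp: unit_ball_Rk_def intro: diff_Rk)
    then have "0 \<le> N (\<lambda>i. y i - y' i)" using N by (auto simp: is_norm_Rk_def)
    then show "norm ((0::'a) - 0) \<le> \<gamma> * N (\<lambda>i. y i - y' i)" using g by simp
  qed
  then show ?thesis unfolding lip_width_Y_def
    by (intro cInf_greatest) (auto intro!: sup0_ge inner_bdd[OF K N])
qed

lemma lipY_le_elem:
  fixes K :: "'a::real_normed_vector set"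
  assumes K: "compact K" and N: "is_norm_Rk k N" and L: "lip_on_ball \<gamma> k N \<Phi>"
  shows "lip_width_Y K \<gamma> k N \<le> Sup (insert 0 {Inf {norm (f - \<Phi> y) | y. y \<in> unit_ball_Rk k N} | f. f \<in> K})"
  unfolding lip_width_Y_def
  by (rule cInf_lower) (auto intro!: L bdd_belowI[of _ 0] sup0_ge inner_bdd[OF K N])

lemma construct:
  fixes K :: "'a::real_normed_vector set"
  assumes K: "compact K" and gc: "cheb_rad K \<le> \<gamma>" and e: "\<epsilon> > 0"
  shows "\<exists>k N. 1 \<le> k \<and> is_norm_Rk k N \<and> lip_width_Y K \<gamma> k N \<le> \<epsilon>"
proof -
  have c0: "0 \<le> cheb_rad K" by (rule cheb_nonneg[OF K])
  define \<eta> where "\<eta> = \<epsilon>/2"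
  have eta: "\<eta> > 0" using e by (simp add: \<eta>_def)
  obtain g where g: "\<And>f. f \<in> K \<Longrightarrow> norm (f - g) \<le> cheb_rad K + \<eta>"
    using cheb_center[OF K eta] by blast
  define R where "R = cheb_rad K + \<eta>"
  define t where "t = min 1 (\<gamma>/R)"
  have R: "R > 0" using c0 eta by (simp add: R_def)
  have t0: "0 \<le> t" using R c0 gc by (simp add: t_def)
  have t1: "t \<le> 1" by (simp add: t_def)
  have tR: "t * R \<le> \<gamma>" using R by (simp add: t_def min_def field_simps)
  have tR2: "(1 - t) * R \<le> \<eta>"
  proof (cases "1 \<le> \<gamma>/R")
    case True then show ?thesis using R eta by (simp add: t_def)
  next
    case False
    then have "t = \<gamma>/R" by (simp add: t_def)
    then have "(1 - t) * R = R - \<gamma>" using R by (simp add: field_simps)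
    then show ?thesis using gc by (simp add: R_def)
  qed
  define h where "h f = g + t *\<^sub>R (f - g)" for f
  have hg: "norm (h f - g) \<le> \<gamma>" if "f \<in> K" for f
  proof -
    have "norm (h f - g) = t * norm (f - g)" using t0 by (simp add: h_def)
    also have "\<dots> \<le> t * R" using g[OF that] t0 by (simp add: R_def mult_left_mono)
    finally show ?thesis using tR by linarith
  qed
  have hf: "norm (f - h f) \<le> \<eta>" if "f \<in> K" for f
  proof -
    have "f - h f = (1 - t) *\<^sub>R (f - g)" by (simp add: h_def algebra_simps)
    then have "norm (f - h f) = (1 - t) * norm (f - g)" using t1 by simp
    also have "\<dots> \<le> (1 - t) * R" using g[OF that] t1 by (simp add: R_def mult_left_mono)
    finally show ?thesis using tR2 by linarith
  qed
  have "\<exists>F. finite F \<and> F \<subseteq> K \<and> K \<subseteq> (\<Union>x\<in>F. ball x \<eta>)"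
    using seq_compact_imp_totally_bounded[OF compact_imp_seq_compact[OF K], rule_format, OF eta] .
  then obtain F where F: "finite F" "F \<subseteq> K" "K \<subseteq> (\<Union>x\<in>F. ball x \<eta>)"
    by (elim exE conjE)
  obtain xs where xs: "set xs = F" using finite_list[OF F(1)] by blast
  define m where "m = length xs"
  define k where "k = Suc m"
  define N where "N y = (\<Sum>i<k. \<bar>y i\<bar>)" for y :: "nat \<Rightarrow> real"
  define \<Phi> where "\<Phi> y = g + (\<Sum>i<m. y i *\<^sub>R (h (xs!i) - g))" for y
  have normN: "is_norm_Rk k N"
    unfolding is_norm_Rk_def
  proof (intro conjI ballI allI)
    fix y assume y: "y \<in> Rk k"
    show "0 \<le> N y" by (simp add: N_def sum_nonneg)
    show "N y = 0 \<longleftrightarrow> y = (\<lambda>_. 0)"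
    proof
      assume "N y = 0"
      then have "\<forall>i\<in>{..<k}. \<bar>y i\<bar> = 0" unfolding N_def
        by (subst sum_nonneg_eq_0_iff[symmetric]) auto
      then show "y = (\<lambda>_. 0)" using y by (auto simp: Rk_def not_less[symmetric])
    qed (simp add: N_def)
  next
    fix c y assume "y \<in> Rk k"
    show "N (\<lambda>i. c * y i) = \<bar>c\<bar> * N y" by (simp add: N_def abs_mult sum_distrib_left)
  next
    fix y z assume "y \<in> Rk k" "z \<in> Rk k"
    show "N (\<lambda>i. y i + z i) \<le> N y + N z" unfolding N_def sum.distrib[symmetric]
      by (rule sum_mono) (rule abs_triangle_ineq)
  qed
  have lip: "lip_on_ball \<gamma> k N \<Phi>"
    unfolding lip_on_ball_def
  proof (intro ballI)
    fix y y' assume "y \<in> unit_ball_Rk k N" "y' \<in> unit_ball_Rk k N"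
    have "\<Phi> y - \<Phi> y' = (\<Sum>i<m. (y i - y' i) *\<^sub>R (h (xs!i) - g))"
      by (simp add: \<Phi>_def sum_subtractf[symmetric] scaleR_diff_left)
    have "norm (\<Phi> y - \<Phi> y') \<le> (\<Sum>i<m. norm ((y i - y' i) *\<^sub>R (h (xs!i) - g)))"
      unfolding \<open>\<Phi> y - \<Phi> y' = _\<close> by (rule norm_sum)
    also have "\<dots> \<le> (\<Sum>i<m. \<bar>y i - y' i\<bar> * \<gamma>)"
    proof (rule sum_mono)
      fix i assume "i \<in> {..<m}"
      then have "xs!i \<in> K" using xs F(2) by (auto simp: m_def)
      then have "norm (h (xs!i) - g) \<le> \<gamma>" by (rule hg)
      then show "norm ((y i - y' i) *\<^sub>R (h (xs!i) - g)) \<le> \<bar>y i - y' i\<bar> * \<gamma>"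
        by (simp add: mult_left_mono)
    qed
    also have "\<dots> \<le> (\<Sum>i<k. \<bar>y i - y' i\<bar> * \<gamma>)"
      using gc c0 by (intro sum_mono2) (auto simp: k_def intro!: mult_nonneg_nonneg)
    also have "\<dots> = \<gamma> * N (\<lambda>i. y i - y' i)" by (simp add: N_def sum_distrib_left mult.commute[of \<gamma>])
    finally show "norm (\<Phi> y - \<Phi> y') \<le> \<gamma> * N (\<lambda>i. y i - y' i)" .
  qed
  have each: "Inf {norm (f - \<Phi> y) | y. y \<in> unit_ball_Rk k N} \<le> \<epsilon>" if f: "f \<in> K" for f
  proof -
    obtain x where x: "x \<in> F" "f \<in> ball x \<eta>" using F(3) f by blast
    obtain j where j: "j < m" "xs!j = x" using x(1) xs by (auto simp: m_def in_set_conv_nth)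
    define ej where "ej = (\<lambda>i::nat. if i = j then 1 else (0::real))"
    have ej: "ej \<in> unit_ball_Rk k N"
      using j by (auto simp: unit_ball_Rk_def Rk_def ej_def N_def k_def)
    have "\<Phi> ej = h x"
    proof -
      have "(\<Sum>i<m. ej i *\<^sub>R (h (xs!i) - g)) = (\<Sum>i<m. if i = j then h (xs!i) - g else 0)"
        by (rule sum.cong) (auto simp: ej_def)
      also have "\<dots> = h x - g" using j by simp
      finally show ?thesis by (simp add: \<Phi>_def)
    qed
    have xK: "x \<in> K" using x(1) F(2) by blast
    have "norm (f - h x) \<le> norm (f - x) + norm (x - h x)" using norm_triangle_ineq[of "f - x" "x - h x"] by simp
    also have "\<dots> \<le> \<eta> + \<eta>" using x(2) hf[OF xK] by (simp add: dist_norm norm_minus_commute)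
    finally have "norm (f - \<Phi> ej) \<le> \<epsilon>" using \<open>\<Phi> ej = h x\<close> by (simp add: \<eta>_def)
    moreover have "Inf {norm (f - \<Phi> y) | y. y \<in> unit_ball_Rk k N} \<le> norm (f - \<Phi> ej)"
      by (rule cInf_lower) (auto intro: ej bdd_belowI[of _ 0])
    ultimately show ?thesis by linarith
  qed
  have "lip_width_Y K \<gamma> k N \<le> \<epsilon>"
  proof -
    have "Sup (insert 0 {Inf {norm (f - \<Phi> y) | y. y \<in> unit_ball_Rk k N} | f. f \<in> K}) \<le> \<epsilon>"
      by (rule sup0_le) (use each e in auto)
    then show ?thesis using lipY_le_elem[OF K normN lip] by linarith
  qed
  then show ?thesis using normN by (intro exI[of _ k] exI[of _ N]) (simp add: k_def)
qed

theorem corollary5p3: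
  fixes K :: "'a::banach set" and n0 :: nat and \<gamma> :: real
  assumes "compact K"
    and "ereal \<gamma> \<ge> kolm_width K n0 + ereal (cheb_rad K)"
  shows "(\<lambda>n. lip_width K \<gamma> n) \<longlonglongrightarrow> 0"
proof -
  have kw: "0 \<le> kolm_width K n0" by (rule kolm_nonneg[OF assms(1)])
  have "ereal (cheb_rad K) \<le> kolm_width K n0 + ereal (cheb_rad K)"
    using add_right_mono[OF kw, of "ereal (cheb_rad K)"] by simp
  then have "ereal (cheb_rad K) \<le> ereal \<gamma>" using assms(2) by (rule order_trans)
  then have gc: "cheb_rad K \<le> \<gamma>" by simp
  have g0: "0 \<le> \<gamma>" using gc cheb_nonneg[OF assms(1)] by linarith
  show ?thesis
  proof (rule LIMSEQ_I)
    fix r :: real assume r: "0 < r"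
    have r2: "0 < r/2" using r by simp
    obtain k N where kN: "1 \<le> k" "is_norm_Rk k N" "lip_width_Y K \<gamma> k N \<le> r/2"
      using construct[OF assms(1) gc r2] by blast
    show "\<exists>no. \<forall>n\<ge>no. norm (lip_width K \<gamma> n - 0) < r"
    proof (intro exI allI impI)
      fix n assume n: "k \<le> n"
      let ?S = "{lip_width_Y K \<gamma> k N | k N. 1 \<le> k \<and> k \<le> n \<and> is_norm_Rk k N}"
      have mem: "lip_width_Y K \<gamma> k N \<in> ?S" using kN n by (intro CollectI exI[of _ k] exI[of _ N]) simp
      have lb: "0 \<le> x" if "x \<in> ?S" for x
      proof -
        from that obtain k' N' where "x = lip_width_Y K \<gamma> k' N'" "is_norm_Rk k' N'" by blast
        then show ?thesis using lipY_nonneg[OF assms(1) _ g0] by simp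
      qed
      have "Inf ?S \<le> lip_width_Y K \<gamma> k N" by (rule cInf_lower[OF mem]) (rule bdd_belowI[of _ 0], rule lb)
      moreover have "0 \<le> Inf ?S" using mem lb by (intro cInf_greatest) blast+
      ultimately have lw: "0 \<le> lip_width K \<gamma> n" "lip_width K \<gamma> n \<le> r/2"
        using kN(3) unfolding lip_width_def by linarith+
      have "norm (lip_width K \<gamma> n - 0) = lip_width K \<gamma> n" using lw(1) by simp
      then show "norm (lip_width K \<gamma> n - 0) < r" using lw r by linarith
    qed
  qed
qed

end
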